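(* Let $n,N\ge 1$ and $\varepsilon\ge 0$ be integers with $\varepsilon/n\le 1/2$ and $N<2^{n(1-h(\varepsilon/n))-1}$. Let $p=1-(1-V_\varepsilon)^N$ be the success probability of a single trial of the attacker, and let $m_{out}=-\ln 2/\ln(1-p)$ be the median number of trials for the attacker to successfully impersonate a user. Then $$m_{out}=\Omega\left(2^{n(1-h(\varepsilon/n))-\log_2 N}\right)\quad\text{and}\quad m_{out}=O\left(2^{n(1-h(\varepsilon/n))+\frac{1}{2}\log_2\left(\varepsilon\left(1-\frac{\varepsilon}{n}\right)\right)-\log_2 N}\right),$$ where $h$ is the binary entropy function.
   Context: Templates are binary vectors in $\mathbb{Z}_2^n$ compared with the Hamming distance $d_{\mathcal H}$; a guess $t$ is accepted against an enrolled template $v$ if $d_{\mathcal H}(t,v)\le\varepsilon$. The $N$ enrolled templates are independent and uniformly distributed in $\mathbb{Z}_2^n$, and the (outsider) attacker generates independent uniformly random templates until one is within distance $\varepsilon$ of some enrolled template. $B_\varepsilon(t)=\{y\in\mathbb{Z}_2^n: d_{\mathcal H}(t,y)\le\varepsilon\}$, $|B_\varepsilon|=\sum_{k=0}^{\varepsilon}\binom{n}{k}$, and $V_\varepsilon=|B_\varepsilon|/2^n$. The binary entropy function is $h(x)=-x\log_2 x-(1-x)\log_2(1-x)$. *)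

theory Defs
  imports Complex_Main
begin

text \<open>Binary entropy function h(x) = - x log2 x - (1-x) log2 (1-x).
  (At x = 0 the product 0 * log 2 0 is 0 in Isabelle, matching the usual convention.)\<close>
definition bin_entropy :: "real \<Rightarrow> real" where
  "bin_entropy x = - x * log 2 x - (1 - x) * log 2 (1 - x)"

definition ball_size :: "nat \<Rightarrow> nat \<Rightarrow> nat" where
  "ball_size n eps = (\<Sum>k\<le>eps. n choose k)"

definition rel_vol :: "nat \<Rightarrow> nat \<Rightarrow> real" where
  "rel_vol n eps = real (ball_size n eps) / 2 ^ n"

definition succ_prob :: "nat \<Rightarrow> nat \<Rightarrow> nat \<Rightarrow> real" where
  "succ_prob n N eps = 1 - (1 - rel_vol n eps) ^ N"

definition m_out :: "nat \<Rightarrow> nat \<Rightarrow> nat \<Rightarrow> real" where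
  "m_out n N eps = - ln 2 / ln (1 - succ_prob n N eps)"

end

theory Submission
  imports Defs
begin


lemma choose_step: "(n choose Suc j) * Suc j = (n choose j) * (n - j)"
proof -
  have "Suc n * (n choose j) = ((n choose j) + (n choose Suc j)) * Suc j"
    using Suc_times_binomial_eq[of n j] by simp
  hence "(n choose Suc j) * Suc j = Suc n * (n choose j) - (n choose j) * Suc j"
    by (simp add: algebra_simps)
  also have "\<dots> = (n choose j) * (n - j)"
    by (simp add: algebra_simps diff_mult_distrib2)
  finally show ?thesis .
qed

lemma step_real:
  fixes p q :: real
  assumes "j < n"
  shows "real (n choose Suc j) * p^Suc j * q^(n - Suc j) * (real (Suc j) * q)
       = real (n choose j) * p^j * q^(n-j) * (real (n - j) * p)"
proof -
  have e: "real (n choose Suc j) * real (Suc j) = real (n choose j) * real (n - j)"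
    using choose_step[of n j] by (metis of_nat_mult)
  have qq: "q^(n-j) = q^(n - Suc j) * q" using assms
    by (metis Suc_diff_Suc power_Suc2)
  have "real (n choose Suc j) * p^Suc j * q^(n - Suc j) * (real (Suc j) * q)
     = (real (n choose Suc j) * real (Suc j)) * (p^j * p * (q^(n - Suc j) * q))"
    by (simp add: mult_ac)
  also have "\<dots> = (real (n choose j) * real (n - j)) * (p^j * p * (q^(n - Suc j) * q))"
    unfolding e ..
  also have "\<dots> = real (n choose j) * p^j * q^(n-j) * (real (n - j) * p)"
    unfolding qq by (simp add: mult_ac)
  finally show ?thesis .
qed



definition bp :: "nat \<Rightarrow> nat \<Rightarrow> nat \<Rightarrow> real" where
  "bp n k j = real (n choose j) * (real k / real n)^j * (1 - real k / real n)^(n-j)"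

lemma bp_up:
  assumes "j < k" "k < n"
  shows "bp n k j \<le> bp n k (Suc j)"
proof -
  define p where "p = real k / real n"
  have n0: "real n > 0" using assms by simp
  have st: "bp n k (Suc j) * (real (Suc j) * (1-p)) = bp n k j * (real (n - j) * p)"
    unfolding bp_def p_def[symmetric] by (rule step_real) (use assms in auto)
  have "real (n-k) * real (Suc j) \<le> real (n-j) * real k"
  proof -
    have "(n-k) * Suc j \<le> (n-j) * k" using assms by (intro mult_mono) auto
    thus ?thesis by (metis of_nat_le_iff of_nat_mult)
  qed
  have q: "1 - p = real (n-k) / real n" unfolding p_def using n0 assms by (simp add: field_simps of_nat_diff)
  have "real (Suc j) * real (n-k) / real n \<le> real (n - j) * real k / real n"
    using \<open>real (n-k) * real (Suc j) \<le> real (n-j) * real k\<close> n0 by (simp add: divide_right_mono mult.commute)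
  hence "real (Suc j) * (1-p) \<le> real (n - j) * p"
    using q by (simp add: p_def)
  moreover have "real (Suc j) * (1-p) > 0" unfolding q using assms n0 by simp
  moreover have "bp n k j \<ge> 0" unfolding bp_def p_def using assms by simp
  ultimately have "bp n k j * (real (Suc j) * (1-p)) \<le> bp n k (Suc j) * (real (Suc j) * (1-p))"
    using st by (metis mult_left_mono)
  thus ?thesis using \<open>real (Suc j) * (1-p) > 0\<close> by (rule mult_right_le_imp_le)
qed

lemma bp_down:
  assumes "k \<le> j" "j < n" "k < n"
  shows "bp n k (Suc j) \<le> bp n k j"
proof -
  define p where "p = real k / real n"
  have n0: "real n > 0" using assms by simp
  have st: "bp n k (Suc j) * (real (Suc j) * (1-p)) = bp n k j * (real (n - j) * p)"
    unfolding bp_def p_def[symmetric] by (rule step_real) (use assms in auto)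
  have "real (n-j) * real k \<le> real (n-k) * real (Suc j)"
  proof -
    have "(n-j) * k \<le> (n-k) * Suc j" using assms by (intro mult_mono) auto
    thus ?thesis by (metis of_nat_le_iff of_nat_mult)
  qed
  have q: "1 - p = real (n-k) / real n" unfolding p_def using n0 assms by (simp add: field_simps of_nat_diff)
  have "real (n - j) * real k / real n \<le> real (Suc j) * real (n-k) / real n"
    using \<open>real (n-j) * real k \<le> real (n-k) * real (Suc j)\<close> n0 by (simp add: divide_right_mono mult.commute)
  hence le: "real (n - j) * p \<le> real (Suc j) * (1-p)"
    using q by (simp add: p_def)
  have pos: "real (Suc j) * (1-p) > 0" unfolding q using assms n0 by simp
  have "bp n k (Suc j) \<ge> 0" unfolding bp_def using assms by simp
  have "bp n k j \<ge> 0" unfolding bp_def using assms by simp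
  hence "bp n k (Suc j) * (real (Suc j) * (1-p)) \<le> bp n k j * (real (Suc j) * (1-p))"
    unfolding st using le by (metis mult_left_mono)
  thus ?thesis using pos by (rule mult_right_le_imp_le)
qed

lemma bp_mode:
  assumes "j \<le> n" "k < n"
  shows "bp n k j \<le> bp n k k"
proof (cases "j \<le> k")
  case True
  show ?thesis using True
  proof (induction j rule: inc_induct)
    case base then show ?case by simp
  next
    case (step i)
    then show ?case using bp_up[of i k n] assms by simp
  qed
next
  case False
  hence "k \<le> j" by simp
  thus ?thesis using assms(1)
  proof (induction j rule: dec_induct)
    case base then show ?case by simp
  next
    case (step i)
    then show ?case using bp_down[of k i n] assms by simp
  qed
qed



lemma moment1:
  fixes x y :: real
  shows "(\<Sum>j\<le>n. real j * (real (n choose j) * x^j * y^(n-j))) = real n * x * (x+y)^(n-1)"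
proof (cases n)
  case 0 then show ?thesis by simp
next
  case (Suc m)
  have "(\<Sum>j\<le>Suc m. real j * (real (Suc m choose j) * x^j * y^(Suc m-j)))
      = (\<Sum>i\<le>m. real (Suc i) * (real (Suc m choose Suc i) * x^Suc i * y^(Suc m - Suc i)))"
    by (subst sum.atMost_Suc_shift) simp
  also have "\<dots> = (\<Sum>i\<le>m. real (Suc m) * x * (real (m choose i) * x^i * y^(m - i)))"
  proof (rule sum.cong[OF refl])
    fix i
    have e: "real (Suc i) * real (Suc m choose Suc i) = real (Suc m) * real (m choose i)"
      using Suc_times_binomial[of i m] by (metis of_nat_mult)
    have "real (Suc i) * (real (Suc m choose Suc i) * x^Suc i * y^(Suc m - Suc i))
      = (real (Suc i) * real (Suc m choose Suc i)) * (x * x^i * y^(m - i))"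
      by (simp add: mult_ac)
    also have "\<dots> = (real (Suc m) * real (m choose i)) * (x * x^i * y^(m - i))"
      unfolding e ..
    also have "\<dots> = real (Suc m) * x * (real (m choose i) * x^i * y^(m - i))"
      by (simp add: mult_ac)
    finally show "real (Suc i) * (real (Suc m choose Suc i) * x^Suc i * y^(Suc m - Suc i)) =
      real (Suc m) * x * (real (m choose i) * x^i * y^(m - i))" .
  qed
  also have "\<dots> = real (Suc m) * x * (x+y)^m"
    by (simp add: sum_distrib_left[symmetric] binomial_ring)
  finally show ?thesis using Suc by simp
qed

lemma moment2:
  fixes x y :: real
  shows "(\<Sum>j\<le>n. real j * (real j - 1) * (real (n choose j) * x^j * y^(n-j)))
     = real n * (real n - 1) * x^2 * (x+y)^(n-2)"
proof (cases n)
  case 0 then show ?thesis by simp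
next
  case (Suc m)
  have "(\<Sum>j\<le>Suc m. real j * (real j - 1) * (real (Suc m choose j) * x^j * y^(Suc m-j)))
      = (\<Sum>i\<le>m. real (Suc i) * (real (Suc i) - 1) * (real (Suc m choose Suc i) * x^Suc i * y^(Suc m - Suc i)))"
    by (subst sum.atMost_Suc_shift) simp
  also have "\<dots> = (\<Sum>i\<le>m. real (Suc m) * x * (real i * (real (m choose i) * x^i * y^(m - i))))"
  proof (rule sum.cong[OF refl])
    fix i
    have e: "real (Suc i) * real (Suc m choose Suc i) = real (Suc m) * real (m choose i)"
      using Suc_times_binomial[of i m] by (metis of_nat_mult)
    have "real (Suc i) * (real (Suc i) - 1) * (real (Suc m choose Suc i) * x^Suc i * y^(Suc m - Suc i))
       = (real (Suc i) * real (Suc m choose Suc i)) * real i * x * x^i * y^(m-i)"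
      by (simp add: algebra_simps)
    also have "\<dots> = real (Suc m) * x * (real i * (real (m choose i) * x^i * y^(m - i)))"
      unfolding e by (simp add: algebra_simps)
    finally show "real (Suc i) * (real (Suc i) - 1) * (real (Suc m choose Suc i) * x^Suc i * y^(Suc m - Suc i)) =
      real (Suc m) * x * (real i * (real (m choose i) * x^i * y^(m - i)))" .
  qed
  also have "\<dots> = real (Suc m) * x * (real m * x * (x+y)^(m-1))"
    by (simp add: sum_distrib_left[symmetric] moment1)
  finally show ?thesis using Suc by (simp add: algebra_simps power2_eq_square)
qed

lemma bp_sum: "(\<Sum>j\<le>n. bp n k j) = 1"
  unfolding bp_def using binomial_ring[of "real k / real n" "1 - real k / real n" n] by simp

lemma bp_var:
  assumes "n \<ge> 1"
  shows "(\<Sum>j\<le>n. (real j - real k)^2 * bp n k j) = real k * (1 - real k / real n)"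
proof -
  define p where "p = real k / real n"
  have n0: "real n > 0" using assms by simp
  have S0: "(\<Sum>j\<le>n. bp n k j) = 1" by (rule bp_sum)
  have S1: "(\<Sum>j\<le>n. real j * bp n k j) = real k"
    unfolding bp_def using moment1[of n p "1-p"] n0 unfolding p_def by simp
  have S2: "(\<Sum>j\<le>n. real j * (real j - 1) * bp n k j) = real n * (real n - 1) * p^2"
    unfolding bp_def using moment2[of n p "1-p"] n0 unfolding p_def by simp
  have "(\<Sum>j\<le>n. (real j - real k)^2 * bp n k j)
     = (\<Sum>j\<le>n. real j * (real j - 1) * bp n k j + (1 - 2 * real k) * (real j * bp n k j) + (real k)^2 * bp n k j)"
    by (rule sum.cong) (simp_all add: algebra_simps power2_eq_square)
  also have "\<dots> = real n * (real n - 1) * p^2 + (1 - 2 * real k) * real k + (real k)^2"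
    by (simp add: sum.distrib sum_distrib_left[symmetric] S0 S1 S2)
  also have "\<dots> = real k * (1 - p)"
    unfolding p_def using n0 by (simp add: field_simps power2_eq_square)
  finally show ?thesis unfolding p_def .
qed

lemma bp_nonneg: assumes "k \<le> n" shows "bp n k j \<ge> 0"
proof -
  have "real k / real n \<le> 1" using assms by (cases "n = 0") (auto simp: divide_le_eq)
  thus ?thesis unfolding bp_def by simp
qed

lemma bp_mode_lower:
  assumes k1: "1 \<le> k" and kn: "2 * k \<le> n"
  shows "bp n k k \<ge> 1 / (8 * sqrt (real k * (1 - real k / real n)))"
proof -
  define v where "v = real k * (1 - real k / real n)"
  define s where "s = sqrt v"
  have n0: "real n > 0" using assms by simp
  have v4: "v \<ge> 1/4"
  proof -
    have "real k / real n \<le> 1/2" using kn n0 by (simp add: field_simps)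
    hence "1 - real k / real n \<ge> 1/2" by simp
    moreover have "real k \<ge> 1" using k1 by simp
    ultimately have "real k * (1 - real k / real n) \<ge> 1 * (1/2)"
      by (intro mult_mono) auto
    thus ?thesis unfolding v_def by linarith
  qed
  have s2: "s \<ge> 1/2" unfolding s_def using v4
    by (metis real_sqrt_four real_sqrt_divide real_sqrt_le_mono real_sqrt_one)
  have ss: "s * s = v" unfolding s_def using v4 by simp
  define r where "r = 2 * s"
  have r0: "r > 0" unfolding r_def using s2 by simp
  define A where "A = {j \<in> {..n}. \<bar>real j - real k\<bar> < r}"
  define B where "B = {j \<in> {..n}. \<not> \<bar>real j - real k\<bar> < r}"
  have knn: "k < n" using assms by simp
  have bnn: "\<And>j. bp n k j \<ge> 0" using bp_nonneg knn by simp
  have AB: "{..n} = A \<union> B" "A \<inter> B = {}" unfolding A_def B_def by auto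
  have fA: "finite A" "finite B" unfolding A_def B_def by auto
  have sumAB: "sum (bp n k) A + sum (bp n k) B = 1"
    using bp_sum[of n k] AB fA by (metis sum.union_disjoint)
  have "sum (bp n k) B \<le> (\<Sum>j\<in>B. (real j - real k)^2 / r^2 * bp n k j)"
  proof (rule sum_mono)
    fix j assume "j \<in> B"
    hence "r \<le> \<bar>real j - real k\<bar>" unfolding B_def by simp
    hence "r^2 \<le> (real j - real k)^2" using r0
      by (metis abs_ge_zero abs_le_square_iff abs_of_pos)
    hence "1 \<le> (real j - real k)^2 / r^2" using r0 by simp
    thus "bp n k j \<le> (real j - real k)^2 / r^2 * bp n k j"
      using bnn[of j] by (metis mult_le_cancel_right1 less_eq_real_def not_less)
  qed
  also have "\<dots> \<le> (\<Sum>j\<le>n. (real j - real k)^2 / r^2 * bp n k j)"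
    by (rule sum_mono2) (use AB fA bnn in auto)
  also have "\<dots> = (\<Sum>j\<le>n. (real j - real k)^2 * bp n k j) / r^2"
    by (simp add: sum_divide_distrib)
  also have "\<dots> = v / r^2" using bp_var[of n k] n0 unfolding v_def by simp
  also have "\<dots> = 1/4" unfolding r_def using ss v4 by (simp add: power2_eq_square)
  finally have "sum (bp n k) B \<le> 1/4" .
  hence "sum (bp n k) A \<ge> 3/4" using sumAB by simp
  moreover have "sum (bp n k) A \<le> real (card A) * bp n k k"
  proof -
    have "sum (bp n k) A \<le> sum (\<lambda>_. bp n k k) A"
      by (rule sum_mono) (use bp_mode[of _ n k] knn in \<open>auto simp: A_def\<close>)
    thus ?thesis by simp
  qed
  moreover have "real (card A) \<le> 2 * r + 1"
  proof -
    define m where "m = nat \<lfloor>r\<rfloor>"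
    have mr: "real m \<le> r" unfolding m_def using r0 by simp
    have "A \<subseteq> {k - m .. k + m}"
    proof
      fix j assume "j \<in> A"
      hence "\<bar>real j - real k\<bar> < r" unfolding A_def by simp
      hence "\<bar>int j - int k\<bar> \<le> \<lfloor>r\<rfloor>"
        by (metis le_floor_iff less_eq_real_def of_int_abs of_int_diff of_int_of_nat_eq)
      hence "\<bar>int j - int k\<bar> \<le> int m" unfolding m_def using r0 by simp
      thus "j \<in> {k - m .. k + m}" by auto
    qed
    hence "card A \<le> card {k - m .. k + m}" by (intro card_mono) auto
    also have "\<dots> \<le> 2 * m + 1" by simp
    finally have "real (card A) \<le> 2 * real m + 1" by linarith
    thus ?thesis using mr by simp
  qed
  ultimately have "3/4 \<le> (2 * r + 1) * bp n k k"
    using bnn[of k] by (meson dual_order.trans mult_right_mono)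
  hence "3/4 \<le> (4 * s + 1) * bp n k k" unfolding r_def by simp
  moreover have "4 * s + 1 \<le> 6 * s" using s2 by simp
  ultimately have "3/4 \<le> 6 * s * bp n k k" using bnn[of k]
    by (meson dual_order.trans mult_right_mono)
  hence "1 / (8 * s) \<le> bp n k k" using s2 by (simp add: field_simps)
  thus ?thesis unfolding s_def v_def .
qed



lemma ball_ge_binom: "k \<le> e \<Longrightarrow> (n choose k) \<le> ball_size n e"
  unfolding ball_size_def by (rule member_le_sum) auto

lemma ball_upper:
  assumes "n \<ge> 1" "2 * k \<le> n"
  shows "real (ball_size n k) * ((real k / real n)^k * (1 - real k / real n)^(n-k)) \<le> 1"
proof -
  define p where "p = real k / real n"
  define q where "q = 1 - p"
  have n0: "real n > 0" using assms by simp
  have p0: "p \<ge> 0" unfolding p_def by simp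
  have pq: "p \<le> q" unfolding p_def q_def using assms n0 by (simp add: field_simps)
  have "real (ball_size n k) * (p^k * q^(n-k)) = (\<Sum>j\<le>k. real (n choose j) * (p^k * q^(n-k)))"
    unfolding ball_size_def by (simp add: sum_distrib_right)
  also have "\<dots> \<le> (\<Sum>j\<le>k. bp n k j)"
  proof (rule sum_mono)
    fix j assume "j \<in> {..k}"
    hence jk: "j \<le> k" by simp
    have "p^k * q^(n-k) = p^j * p^(k-j) * q^(n-k)"
      using jk by (metis le_add_diff_inverse power_add)
    also have "\<dots> \<le> p^j * q^(k-j) * q^(n-k)"
      using p0 pq by (intro mult_right_mono mult_left_mono power_mono) auto
    also have "\<dots> = p^j * q^(n-j)"
    proof -
      have "n - j = (k - j) + (n - k)" using jk assms by simp
      thus ?thesis by (simp add: power_add mult_ac)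
    qed
    finally have "p^k * q^(n-k) \<le> p^j * q^(n-j)" .
    thus "real (n choose j) * (p^k * q^(n-k)) \<le> bp n k j"
      unfolding bp_def p_def[symmetric] q_def[symmetric]
      by (metis mult.assoc mult_left_mono of_nat_0_le_iff)
  qed
  also have "\<dots> \<le> (\<Sum>j\<le>n. bp n k j)"
    by (rule sum_mono2) (use assms bp_nonneg in auto)
  also have "\<dots> = 1" by (rule bp_sum)
  finally show ?thesis unfolding p_def q_def .
qed

lemma ent:
  assumes "n \<ge> 1" "2 * k \<le> n"
  shows "real n * (1 - bin_entropy (real k / real n))
       = real n + log 2 ((real k / real n)^k * (1 - real k / real n)^(n-k))"
proof (cases "k = 0")
  case True then show ?thesis by (simp add: bin_entropy_def)
next
  case False
  define p where "p = real k / real n"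
  define q where "q = 1 - p"
  have n0: "real n > 0" using assms by simp
  have p0: "p > 0" unfolding p_def using False n0 by simp
  have q0: "q > 0" unfolding q_def p_def using assms n0 False by (simp add: field_simps)
  have np: "real n * p = real k" unfolding p_def using n0 by simp
  have nq: "real n * q = real (n - k)" unfolding q_def p_def using n0 assms by (simp add: field_simps of_nat_diff)
  have "log 2 (p^k * q^(n-k)) = real k * log 2 p + real (n-k) * log 2 q"
    using p0 q0 by (simp add: log_mult_pos log_nat_power)
  moreover have "real n * bin_entropy p = - (real n * p) * log 2 p - (real n * q) * log 2 q"
    unfolding bin_entropy_def q_def by (simp add: algebra_simps)
  ultimately have "real n * bin_entropy p = - log 2 (p^k * q^(n-k))"
    unfolding np nq by simp
  thus ?thesis unfolding p_def[symmetric] q_def[symmetric] by (simp add: algebra_simps)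
qed



lemma powr_half_log: assumes "(a::real) > 0" shows "2 powr (1/2 * log 2 a) = sqrt a"
proof -
  have "2 powr (1/2 * log 2 a) = (2 powr log 2 a) powr (1/2)"
    by (simp add: powr_powr mult.commute)
  also have "\<dots> = sqrt a" using assms by (simp add: powr_half_sqrt)
  finally show ?thesis .
qed

lemma main_bounds:
  fixes n N k :: nat
  assumes n1: "n \<ge> 1" and N1: "N \<ge> 1" and pk: "real k / real n \<le> 1/2"
    and NH: "real N < 2 powr (real n * (1 - bin_entropy (real k / real n)) - 1)"
  shows "ln 2 / 2 * 2 powr (real n * (1 - bin_entropy (real k / real n)) - log 2 (real N))
         \<le> m_out n N k
       \<and> (k \<ge> 1 \<longrightarrow>
           m_out n N k \<le> 8 * ln 2 * 2 powr (real n * (1 - bin_entropy (real k / real n))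
              + 1/2 * log 2 (real k * (1 - real k / real n)) - log 2 (real N)))"
proof -
  define p where "p = real k / real n"
  define q where "q = 1 - p"
  define W where "W = p^k * q^(n-k)"
  define H where "H = 2^n * W"
  define X where "X = real n * (1 - bin_entropy p)"
  define V where "V = rel_vol n k"
  define L where "L = - ln (1 - V)"
  have n0: "real n > 0" using n1 by simp
  have N0: "real N > 0" using N1 by simp
  have kn: "2 * k \<le> n" using pk n0 by (simp add: field_simps)
  have p0: "p \<ge> 0" unfolding p_def by simp
  have q0: "q > 0" unfolding q_def p_def using kn n0 n1 by (simp add: field_simps)
  have W0: "W > 0" unfolding W_def
  proof -
    have "p^k > 0"
    proof (cases "k = 0")
      case False then show ?thesis unfolding p_def using n0 by simp
    qed simp
    thus "p^k * q^(n-k) > 0" using q0 by simp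
  qed
  have H0: "H > 0" unfolding H_def using W0 by simp
  have X: "X = real n + log 2 W" unfolding X_def W_def p_def q_def using ent[OF n1 kn] .
  have PX: "2 powr X = H" unfolding X H_def using W0 by (simp add: powr_add powr_realpow)
  have NH2: "real N < H / 2" using NH unfolding p_def[symmetric] X_def[symmetric]
    by (simp add: powr_diff PX)
  have VH: "V * H \<le> 1"
    using ball_upper[OF n1 kn] unfolding V_def H_def rel_vol_def W_def p_def q_def by simp
  have ball1: "ball_size n k \<ge> 1" using ball_ge_binom[of 0 k n] by simp
  have V0: "V > 0" unfolding V_def rel_vol_def using ball1 by simp
  have H2: "H > 2" using NH2 N1 by simp
  have Vh: "V < 1/2"
  proof -
    have "V * 2 < V * H" using V0 H2 by simp
    hence "V * H < 1/2 * H" using VH H2 by simp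
    thus ?thesis using H0 by simp
  qed
  have ms: "1 - succ_prob n N k = (1 - V)^N" unfolding succ_prob_def V_def by simp
  have mo: "m_out n N k = ln 2 / (real N * L)"
    unfolding m_out_def ms L_def using Vh by (simp add: ln_realpow)
  have LV: "V \<le> L" unfolding L_def using ln_le_minus_one[of "1 - V"] Vh by simp
  have L2: "L \<le> 2 * V"
  proof -
    have "- V - 2 * V^2 \<le> ln (1 - V)" using ln_one_minus_pos_lower_bound[of V] V0 Vh by simp
    moreover have "2 * V^2 \<le> V" using V0 Vh by (simp add: power2_eq_square)
    ultimately show ?thesis unfolding L_def by simp
  qed
  have L0: "L > 0" using LV V0 by simp
  have lower: "ln 2 / 2 * 2 powr (X - log 2 (real N)) \<le> m_out n N k"
  proof -
    have "2 powr (X - log 2 (real N)) = H / real N" using N0 by (simp add: powr_diff PX)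
    moreover have "ln 2 / 2 * (H / real N) \<le> ln 2 / (real N * L)"
    proof -
      have "H * L \<le> H * (2 * V)" using L2 H0 by (intro mult_left_mono) auto
      also have "\<dots> = 2 * (V * H)" by (simp add: mult_ac)
      also have "\<dots> \<le> 2" using VH by simp
      finally have "H * L \<le> 2" .
      hence "ln 2 / 2 * H * L \<le> ln 2" by (simp add: mult.assoc)
      thus ?thesis using N0 L0 by (simp add: field_simps)
    qed
    ultimately show ?thesis unfolding mo by simp
  qed
  have upper: "m_out n N k \<le> 8 * ln 2 * 2 powr (X + 1/2 * log 2 (real k * (1 - real k / real n)) - log 2 (real N))"
    if k1: "k \<ge> 1"
  proof -
    define s where "s = sqrt (real k * (1 - real k / real n))"
    have v0: "real k * (1 - real k / real n) > 0" using q0 k1 unfolding q_def p_def by simp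
    have s0: "s > 0" unfolding s_def using v0 by simp
    have "2 powr (1/2 * log 2 (real k * (1 - real k / real n))) = s"
      unfolding s_def using v0 by (rule powr_half_log)
    hence P: "2 powr (X + 1/2 * log 2 (real k * (1 - real k / real n)) - log 2 (real N)) = H * s / real N"
      using N0 by (simp add: powr_diff powr_add PX)
    have bk: "bp n k k \<ge> 1 / (8 * s)" unfolding s_def using bp_mode_lower[OF k1 kn] .
    have "bp n k k = real (n choose k) * W" unfolding bp_def W_def p_def q_def by simp
    also have "\<dots> \<le> real (ball_size n k) * W" using W0 ball_ge_binom[of k k n] by simp
    also have "\<dots> = V * H" unfolding V_def H_def rel_vol_def by simp
    finally have "1 / (8 * s) \<le> V * H" using bk by simp
    hence "1 \<le> 8 * s * H * V" using s0 by (simp add: field_simps)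
    also have "\<dots> \<le> 8 * s * H * L" using LV s0 H0 by simp
    finally have "ln 2 \<le> ln 2 * (8 * s * H * L)" by simp
    hence "ln 2 / (real N * L) \<le> 8 * ln 2 * (H * s / real N)" using N0 L0
      by (simp add: field_simps)
    thus ?thesis unfolding mo P .
  qed
  show ?thesis using lower upper unfolding X_def p_def by simp
qed

theorem theorem4p1:
  shows "\<exists>c > 0. \<exists>C > 0. \<forall>(n::nat) (N::nat) (eps::nat).
     n \<ge> 1 \<longrightarrow> N \<ge> 1 \<longrightarrow> real eps / real n \<le> 1/2 \<longrightarrow>
     real N < 2 powr (real n * (1 - bin_entropy (real eps / real n)) - 1) \<longrightarrow>
       c * 2 powr (real n * (1 - bin_entropy (real eps / real n)) - log 2 (real N))
         \<le> m_out n N eps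
       \<and> (eps \<ge> 1 \<longrightarrow>
           m_out n N eps \<le> C * 2 powr (real n * (1 - bin_entropy (real eps / real n))
              + 1/2 * log 2 (real eps * (1 - real eps / real n)) - log 2 (real N)))"
  apply (rule exI[of _ "ln 2 / 2"])
  apply (rule conjI, simp)
  apply (rule exI[of _ "8 * ln 2"])
  apply (rule conjI, simp)
  apply (intro allI impI)
  apply (rule main_bounds)
     apply assumption+
  done



end
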